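(* Let $V=\{1,\dots,n\}$ be the node set of a directed graph and, for each realization $z$ (a random simulation of an Independent Cascade process), let $P_v^z\subseteq V$ be the set of nodes reachable from $v$. Define $g_z(\mathbf{x})=\sum_{v\in V}\frac1n\big(1-\prod_{i\in P_v^z}(1-x_i)\big)$ and $f_z(\mathbf{x})=h(g_z(\mathbf{x}))$ with $h(s)=\log(1+s)$, and $f(\mathbf{x})=\mathbb{E}_{z\sim P}[f_z(\mathbf{x})]$. Let $\hat h^L(s)=\sum_{\ell=0}^L\frac{h^{(\ell)}(1/2)}{\ell!}(s-1/2)^\ell$ and $\hat f_z^L(\mathbf{x})=\hat h^L(g_z(\mathbf{x}))$. Let $G_z$ be the multilinear relaxation of $f_z$ and $\widehat{\nabla G_z^L}$ the polynomial estimator built from $\hat f_z^L$. Then for all $\mathbf{y}\in[0,1]^n$, $$\big\|\nabla G_z(\mathbf{y})-\widehat{\nabla G_z^L}(\mathbf{y})\big\|_2\le\frac{\sqrt n}{(L+1)2^L}.$$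
   Context: $G_z(\mathbf{y})=\mathbb{E}_{\mathbf{x}\sim\mathbf{y}}[f_z(\mathbf{x})]$ where $\mathbf{x}\sim\mathbf{y}$ has independent Bernoulli$(y_i)$ coordinates. For a polynomial $p(\mathbf{y})=c_0+\sum_\ell c_\ell\prod_{i\in J_\ell}y_i^{k_i^\ell}$ ($k_i^\ell\ge1$), its multilinearization is $\dot p(\mathbf{y})=c_0+\sum_\ell c_\ell\prod_{i\in J_\ell}y_i$. The polynomial estimator is $\big(\widehat{\nabla G_z^L}(\mathbf{y})\big)_i=\dot{\hat f}{}_z^L([\mathbf{y}]_{+i})-\dot{\hat f}{}_z^L([\mathbf{y}]_{-i})$, where $[\mathbf{y}]_{+i}$, $[\mathbf{y}]_{-i}$ denote $\mathbf{y}$ with coordinate $i$ set to $1$, $0$. *)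

theory Defs
  imports "HOL-Analysis.Analysis" "HOL-Library.Poly_Mapping"
begin

type_synonym 'n mpoly = "('n \<Rightarrow>\<^sub>0 nat) \<Rightarrow>\<^sub>0 real"

definition pconst :: "real \<Rightarrow> 'n mpoly" where
  "pconst c = Poly_Mapping.single 0 c"

definition pvar :: "'n \<Rightarrow> 'n mpoly" where
  "pvar i = Poly_Mapping.single (Poly_Mapping.single i 1) 1"

text \<open>Multilinearization evaluated at y: every power y_i^k (k \<ge> 1) is replaced by y_i.\<close>
definition mlin_eval :: "'n mpoly \<Rightarrow> (real ^ 'n) \<Rightarrow> real" where
  "mlin_eval p y = (\<Sum>m\<in>Poly_Mapping.keys p. Poly_Mapping.lookup p m * (\<Prod>i\<in>Poly_Mapping.keys m. y $ i))"

definition vupd :: "real ^ 'n \<Rightarrow> 'n \<Rightarrow> real \<Rightarrow> real ^ 'n" where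
  "vupd y i t = (\<chi> j. if j = i then t else y $ j)"

definition reach :: "('n \<Rightarrow> 'n \<Rightarrow> bool) \<Rightarrow> 'n \<Rightarrow> 'n set" where
  "reach E v = {u. E\<^sup>*\<^sup>* v u}"

definition h :: "real \<Rightarrow> real" where
  "h s = ln (1 + s)"

definition g_z :: "('n::finite \<Rightarrow> 'n \<Rightarrow> bool) \<Rightarrow> real ^ 'n \<Rightarrow> real" where
  "g_z E x = (\<Sum>v\<in>UNIV. (1 / real CARD('n)) * (1 - (\<Prod>i\<in>reach E v. 1 - x $ i)))"

definition f_z :: "('n::finite \<Rightarrow> 'n \<Rightarrow> bool) \<Rightarrow> real ^ 'n \<Rightarrow> real" where
  "f_z E x = h (g_z E x)"

definition g_poly :: "('n::finite \<Rightarrow> 'n \<Rightarrow> bool) \<Rightarrow> 'n mpoly" where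
  "g_poly E = (\<Sum>v\<in>UNIV. pconst (1 / real CARD('n)) *
                 (1 - (\<Prod>i\<in>reach E v. 1 - pvar i)))"

definition taylor_coeff :: "nat \<Rightarrow> real" where
  "taylor_coeff l = (deriv ^^ l) h (1/2) / fact l"

definition h_hat :: "nat \<Rightarrow> real \<Rightarrow> real" where
  "h_hat L s = (\<Sum>l\<le>L. taylor_coeff l * (s - 1/2) ^ l)"

definition f_hat_poly :: "nat \<Rightarrow> ('n::finite \<Rightarrow> 'n \<Rightarrow> bool) \<Rightarrow> 'n mpoly" where
  "f_hat_poly L E = (\<Sum>l\<le>L. pconst (taylor_coeff l) * (g_poly E - pconst (1/2)) ^ l)"

text \<open>Multilinear relaxation G_z(y) = E_{x ~ y}[f_z(x)], x with independent Bernoulli(y_i)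
  coordinates, written as the explicit finite expectation (polynomial in y).\<close>
definition G_z :: "('n::finite \<Rightarrow> 'n \<Rightarrow> bool) \<Rightarrow> real ^ 'n \<Rightarrow> real" where
  "G_z E y = (\<Sum>x\<in>(UNIV :: ('n \<Rightarrow> bool) set).
      (\<Prod>i\<in>UNIV. if x i then y $ i else 1 - y $ i) * f_z E (\<chi> i. if x i then 1 else 0))"

definition grad :: "(real ^ 'n \<Rightarrow> real) \<Rightarrow> real ^ 'n \<Rightarrow> real ^ 'n" where
  "grad F y = (\<chi> i. deriv (\<lambda>t. F (vupd y i t)) (y $ i))"

definition grad_est :: "nat \<Rightarrow> ('n::finite \<Rightarrow> 'n \<Rightarrow> bool) \<Rightarrow> real ^ 'n \<Rightarrow> real ^ 'n" where
  "grad_est L E y = (\<chi> i. mlin_eval (f_hat_poly L E) (vupd y i 1)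
                         - mlin_eval (f_hat_poly L E) (vupd y i 0))"

end

theory Submission imports Defs begin

definition evc :: "(('n \<Rightarrow>\<^sub>0 nat) \<Rightarrow> real) \<Rightarrow> 'n mpoly \<Rightarrow> real" where
  "evc ch p = (\<Sum>m\<in>Poly_Mapping.keys p. Poly_Mapping.lookup p m * ch m)"

lemma evc_superset:
  assumes "finite S" "Poly_Mapping.keys p \<subseteq> S"
  shows "evc ch p = (\<Sum>m\<in>S. Poly_Mapping.lookup p m * ch m)"
  unfolding evc_def
  by (rule sum.mono_neutral_left) (use assms in \<open>auto simp: in_keys_iff\<close>)

lemma evc_add: "evc ch (p + q) = evc ch p + evc ch q"
proof -
  let ?S = "Poly_Mapping.keys p \<union> Poly_Mapping.keys q"
  have "evc ch (p + q) = (\<Sum>m\<in>?S. Poly_Mapping.lookup (p+q) m * ch m)"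
    by (rule evc_superset) (use keys_add[of p q] in auto)
  also have "\<dots> = (\<Sum>m\<in>?S. Poly_Mapping.lookup p m * ch m) + (\<Sum>m\<in>?S. Poly_Mapping.lookup q m * ch m)"
    by (simp add: lookup_add distrib_right sum.distrib)
  also have "\<dots> = evc ch p + evc ch q"
    by (simp add: evc_superset[of ?S p ch] evc_superset[of ?S q ch])
  finally show ?thesis .
qed

lemma evc_zero[simp]: "evc ch 0 = 0" by (simp add: evc_def)

lemma evc_uminus: "evc ch (- p) = - evc ch p"
  by (simp add: evc_def sum_negf)

lemma evc_diff: "evc ch (p - q) = evc ch p - evc ch q"
  using evc_add[of ch p "-q"] by (simp add: evc_uminus)

lemma evc_sum: "evc ch (sum f A) = (\<Sum>a\<in>A. evc ch (f a))"
  by (induction A rule: infinite_finite_induct) (auto simp: evc_add)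

lemma evc_single: "evc ch (Poly_Mapping.single m c) = c * ch m"
  by (simp add: evc_def)

lemma pm_decomp: "(p::'n mpoly) = (\<Sum>a\<in>Poly_Mapping.keys p. Poly_Mapping.single a (Poly_Mapping.lookup p a))"
proof (rule poly_mapping_eqI)
  fix k
  show "Poly_Mapping.lookup p k = Poly_Mapping.lookup (\<Sum>a\<in>Poly_Mapping.keys p. Poly_Mapping.single a (Poly_Mapping.lookup p a)) k"
    by (simp add: lookup_sum lookup_single when_def in_keys_iff)
qed

lemma evc_mult:
  assumes chi: "\<And>a b. ch (a + b) = ch a * ch b"
  shows "evc ch (p * q) = evc ch p * evc ch q"
proof -
  have "p * q = (\<Sum>a\<in>Poly_Mapping.keys p. Poly_Mapping.single a (Poly_Mapping.lookup p a)) *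
     (\<Sum>b\<in>Poly_Mapping.keys q. Poly_Mapping.single b (Poly_Mapping.lookup q b))"
    using pm_decomp[of p] pm_decomp[of q] by simp
  also have "\<dots> = (\<Sum>a\<in>Poly_Mapping.keys p. \<Sum>b\<in>Poly_Mapping.keys q.
       Poly_Mapping.single (a + b) (Poly_Mapping.lookup p a * Poly_Mapping.lookup q b))"
    by (simp add: sum_product mult_single)
  finally have "evc ch (p * q) = (\<Sum>a\<in>Poly_Mapping.keys p. \<Sum>b\<in>Poly_Mapping.keys q.
       (Poly_Mapping.lookup p a * ch a) * (Poly_Mapping.lookup q b * ch b))"
    by (simp add: evc_sum evc_single chi mult_ac)
  then show ?thesis by (simp add: evc_def sum_product)
qed

lemma evc_prod:
  assumes chi: "\<And>a b. ch (a + b) = ch a * ch b" and chi0: "ch 0 = 1"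
  shows "evc ch (prod f A) = (\<Prod>a\<in>A. evc ch (f a))"
proof (induction A rule: infinite_finite_induct)
  case (infinite A)
  then show ?case using chi0 by (simp add: evc_def)
next
  case empty
  then show ?case using chi0 by (simp add: evc_def)
next
  case (insert x F)
  then show ?case by (simp add: evc_mult[OF chi])
qed

lemma evc_one: "ch 0 = 1 \<Longrightarrow> evc ch 1 = 1"
  by (simp add: evc_def)

lemma evc_power:
  assumes chi: "\<And>a b. ch (a + b) = ch a * ch b" and chi0: "ch 0 = 1"
  shows "evc ch (p ^ k) = evc ch p ^ k"
  by (induction k) (simp_all add: evc_one[of ch, OF chi0] evc_mult[OF chi])

lemma evc_pconst: "ch 0 = 1 \<Longrightarrow> evc ch (pconst c) = c"
  by (simp add: pconst_def evc_single)

lemma evc_pvar: "evc ch (pvar i) = ch (Poly_Mapping.single i 1)"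
  by (simp add: pvar_def evc_single)

lemma keys_add_nat: "Poly_Mapping.keys (a + b :: 'n \<Rightarrow>\<^sub>0 nat) = Poly_Mapping.keys a \<union> Poly_Mapping.keys b"
  by (auto simp: in_keys_iff lookup_add)

definition bin :: "('n::finite \<Rightarrow> bool) \<Rightarrow> real ^ 'n" where
  "bin x = (\<chi> i. if x i then 1 else 0)"

definition chib :: "('n::finite \<Rightarrow> bool) \<Rightarrow> ('n \<Rightarrow>\<^sub>0 nat) \<Rightarrow> real" where
  "chib x m = (\<Prod>i\<in>Poly_Mapping.keys m. bin x $ i)"

lemma chib_alt: "chib x m = (if \<forall>i\<in>Poly_Mapping.keys m. x i then 1 else 0)"
  unfolding chib_def bin_def by (auto simp: prod_zero_iff)

lemma chib_add: "chib x (a + b) = chib x a * chib x b"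
  by (auto simp: chib_alt keys_add_nat)

lemma chib_0: "chib x 0 = 1" by (simp add: chib_def)

lemma mlin_bin: "mlin_eval p (bin x) = evc (chib x) p"
  by (simp add: mlin_eval_def evc_def chib_def)

lemma ev_g: "mlin_eval (g_poly E) (bin x) = g_z E (bin x)"
  unfolding mlin_bin g_poly_def g_z_def
  by (simp add: evc_sum evc_mult[of "chib x", OF chib_add] evc_pconst[of "chib x", OF chib_0] evc_diff evc_one[of "chib x", OF chib_0]
      evc_prod[of "chib x", OF chib_add chib_0] evc_pvar chib_def)

lemma ev_fhat: "mlin_eval (f_hat_poly L E) (bin x) = h_hat L (g_z E (bin x))"
  using ev_g[of E x] unfolding mlin_bin f_hat_poly_def h_hat_def
  by (simp add: evc_sum evc_mult[of "chib x", OF chib_add] evc_pconst[of "chib x", OF chib_0] evc_diff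
      evc_power[of "chib x", OF chib_add chib_0])


definition dh :: "nat \<Rightarrow> real \<Rightarrow> real" where
  "dh m s = (if m = 0 then ln (1 + s) else (-1) ^ (m + 1) * fact (m - 1) / (1 + s) ^ m)"

lemma dh_deriv:
  assumes "s > -1"
  shows "(dh m has_real_derivative dh (Suc m) s) (at s)"
proof (cases "m = 0")
  case True
  have "((\<lambda>s. ln (1 + s)) has_real_derivative 1 / (1 + s)) (at s)"
    using assms by (auto intro!: derivative_eq_intros)
  then show ?thesis using True by (simp add: dh_def[abs_def])
next
  case False
  then obtain k where m: "m = Suc k" by (cases m) auto
  have "((\<lambda>s. (-1) ^ (m + 1) * fact (m - 1) / (1 + s) ^ m) has_real_derivative
       (-1) ^ (m + 1) * fact (m - 1) * (- (real m * (1 + s) ^ (m - 1)) / ((1 + s) ^ m)^2)) (at s)"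
    using assms by (auto intro!: derivative_eq_intros simp: divide_simps power2_eq_square)
  moreover have "(-1) ^ (m + 1) * fact (m - 1) * (- (real m * (1 + s) ^ (m - 1)) / ((1 + s) ^ m)^2)
      = dh (Suc m) s"
  proof -
    have ne: "1 + s \<noteq> 0" using assms by simp
    have sq: "((1 + s) ^ m)^2 = (1 + s) ^ Suc m * (1 + s) ^ k" using m by (simp add: power2_eq_square power_add[symmetric])
    have fm: "fact m = real m * fact k" using m by simp
    have pk: "(1 + s) ^ k \<noteq> 0" using ne by simp
    have "(-1) ^ (m + 1) * fact (m - 1) * (- (real m * (1 + s) ^ (m - 1)) / ((1 + s) ^ m)^2)
        = (-1) ^ (m + 1) * fact k * (- real m) * ((1 + s) ^ k / ((1 + s) ^ Suc m * (1 + s) ^ k))"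
      unfolding sq using m ne by (simp add: field_simps)
    also have "(1 + s) ^ k / ((1 + s) ^ Suc m * (1 + s) ^ k) = 1 / (1 + s) ^ Suc m"
      using pk by simp
    also have "(-1) ^ (m + 1) * fact k * (- real m) * (1 / (1 + s) ^ Suc m) = dh (Suc m) s"
      unfolding dh_def using ne fm by (simp add: field_simps)
    finally show ?thesis .
  qed
  ultimately show ?thesis using False by (simp add: dh_def[abs_def])
qed

lemma h_derivs: "s > -1 \<Longrightarrow> (deriv ^^ m) h s = dh m s"
proof (induction m arbitrary: s)
  case 0
  then show ?case by (simp add: h_def dh_def)
next
  case (Suc m)
  have ev: "eventually (\<lambda>t. (deriv ^^ m) h t = dh m t) (nhds s)"
  proof -
    have "eventually (\<lambda>t. t \<in> {-1<..}) (nhds s)"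
      using Suc.prems by (intro eventually_nhds_in_open) auto
    then show ?thesis by eventually_elim (use Suc.IH in auto)
  qed
  have "(deriv ^^ Suc m) h s = deriv ((deriv ^^ m) h) s" by simp
  also have "\<dots> = deriv (dh m) s" by (rule deriv_cong_ev[OF ev refl])
  also have "\<dots> = dh (Suc m) s" by (rule DERIV_imp_deriv[OF dh_deriv[OF Suc.prems]])
  finally show ?case .
qed

lemma taylor_coeff_dh: "taylor_coeff l = dh l (1/2) / fact l"
  by (simp add: taylor_coeff_def h_derivs)

lemma h_hat_err:
  assumes "0 \<le> s" "s \<le> 1"
  shows "\<bar>h s - h_hat L s\<bar> \<le> 1 / (real (L + 1) * 2 ^ (L + 1))"
proof (cases "s = 1/2")
  case True
  have "h_hat L s = h s"
    unfolding h_hat_def True using taylor_coeff_dh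
    by (simp add: sum.atMost_shift zero_power dh_def h_def taylor_coeff_def)
  then show ?thesis by simp
next
  case False
  obtain t where t: "(if s < 1/2 then s < t \<and> t < 1/2 else 1/2 < t \<and> t < s)"
    and eq: "h s = (\<Sum>m<Suc L. (dh m (1/2) / fact m) * (s - 1/2)^m) + (dh (Suc L) t / fact (Suc L)) * (s - 1/2)^(Suc L)"
    using Taylor[of "Suc L" dh h 0 1 "1/2" s] dh_deriv False assms
    by (force simp: dh_def[abs_def] h_def[abs_def])
  have t0: "0 \<le> t" using t assms by (auto split: if_splits)
  have "h_hat L s = (\<Sum>m<Suc L. (dh m (1/2) / fact m) * (s - 1/2)^m)"
    unfolding h_hat_def taylor_coeff_dh by (simp add: lessThan_Suc_atMost)
  then have "\<bar>h s - h_hat L s\<bar> = \<bar>dh (Suc L) t / fact (Suc L) * (s - 1/2)^(Suc L)\<bar>"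
    using eq by simp
  also have "\<dots> = fact L / fact (Suc L) / (1 + t) ^ Suc L * \<bar>s - 1/2\<bar> ^ Suc L"
    using t0 by (simp add: dh_def abs_mult power_abs)
  also have "\<dots> \<le> fact L / fact (Suc L) / 1 * (1/2) ^ Suc L"
  proof (intro mult_mono divide_left_mono power_mono)
    show "1 \<le> (1 + t) ^ Suc L" using t0 by (intro one_le_power) simp
    show "\<bar>s - 1/2\<bar> \<le> 1/2" using assms by (cases "s < 1/2") auto
  qed (use t0 in auto)
  also have "\<dots> = 1 / (real (L + 1) * 2 ^ (L + 1))"
  proof -
    have fp: "fact L > (0::real)" by simp
    have "fact L / fact (Suc L) = (1::real) / real (L + 1)"
      using fp by (simp add: fact_Suc divide_simps)
    then show ?thesis by (simp add: power_one_over)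
  qed
  finally show ?thesis .
qed


definition w :: "real ^ 'n \<Rightarrow> ('n::finite \<Rightarrow> bool) \<Rightarrow> real" where
  "w y x = (\<Prod>i\<in>UNIV. if x i then y $ i else 1 - y $ i)"

lemma sum_prod_bool:
  fixes F :: "'n::finite \<Rightarrow> bool \<Rightarrow> real"
  shows "(\<Sum>x\<in>(UNIV :: ('n \<Rightarrow> bool) set). \<Prod>i\<in>UNIV. F i (x i)) = (\<Prod>i\<in>UNIV. F i True + F i False)"
proof -
  have "(\<Prod>i\<in>UNIV. \<Sum>b\<in>(UNIV::bool set). F i b) = (\<Sum>g\<in>PiE UNIV (\<lambda>_. UNIV). \<Prod>i\<in>UNIV. F i (g i))"
    by (rule prod_sum_PiE) auto
  also have "PiE UNIV (\<lambda>_. UNIV) = (UNIV :: ('n \<Rightarrow> bool) set)" by (rule PiE_UNIV)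
  finally show ?thesis by (simp add: UNIV_bool add.commute)
qed

lemma E_chib:
  "(\<Sum>x\<in>UNIV. w y x * chib x m) = (\<Prod>i\<in>Poly_Mapping.keys m. y $ i)"
proof -
  let ?K = "Poly_Mapping.keys m"
  define c where "c i b = (if i \<in> ?K then (if b then 1 else 0) else (1::real))" for i b
  have ch: "chib x m = (\<Prod>i\<in>UNIV. c i (x i))" for x
  proof -
    have "(\<Prod>i\<in>UNIV. c i (x i)) = (\<Prod>i\<in>UNIV \<inter> {i. i \<in> ?K}. (if x i then 1 else 0)) * (\<Prod>i\<in>UNIV \<inter> - {i. i \<in> ?K}. 1)"
      unfolding c_def by (rule prod.If_cases) simp
    then show ?thesis by (simp add: chib_def bin_def)
  qed
  have "(\<Sum>x\<in>UNIV. w y x * chib x m) = (\<Sum>x\<in>UNIV. \<Prod>i\<in>UNIV. (if x i then y $ i else 1 - y $ i) * c i (x i))"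
    by (simp add: w_def ch prod.distrib)
  also have "\<dots> = (\<Prod>i\<in>UNIV. y $ i * c i True + (1 - y $ i) * c i False)"
    by (rule sum_prod_bool[where F = "\<lambda>i b. (if b then y $ i else 1 - y $ i) * c i b", simplified])
  also have "\<dots> = (\<Prod>i\<in>UNIV. if i \<in> ?K then y $ i else 1)"
    by (rule prod.cong) (auto simp: c_def)
  also have "\<dots> = (\<Prod>i\<in>?K. y $ i)"
    by (simp add: prod.If_cases Int_def)
  finally show ?thesis .
qed

lemma w_sum: "(\<Sum>x\<in>UNIV. w y x) = 1"
  using E_chib[of y 0] by (simp add: chib_0)

lemma w_nonneg: "\<forall>i. 0 \<le> y $ i \<and> y $ i \<le> 1 \<Longrightarrow> 0 \<le> w y x"
  unfolding w_def by (intro prod_nonneg) auto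

lemma mlin_E: "mlin_eval p y = (\<Sum>x\<in>UNIV. w y x * mlin_eval p (bin x))"
proof -
  have "(\<Sum>x\<in>UNIV. w y x * mlin_eval p (bin x))
      = (\<Sum>x\<in>UNIV. \<Sum>m\<in>Poly_Mapping.keys p. Poly_Mapping.lookup p m * (w y x * chib x m))"
    by (simp add: mlin_bin evc_def sum_distrib_left mult_ac)
  also have "\<dots> = (\<Sum>m\<in>Poly_Mapping.keys p. Poly_Mapping.lookup p m * (\<Sum>x\<in>UNIV. w y x * chib x m))"
    by (subst sum.swap) (simp add: sum_distrib_left)
  also have "\<dots> = mlin_eval p y"
    by (simp add: E_chib mlin_eval_def)
  finally show ?thesis by simp
qed

lemma G_alt: "G_z E y = (\<Sum>x\<in>UNIV. w y x * f_z E (bin x))"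
  by (simp add: G_z_def w_def bin_def)

definition wr :: "real ^ 'n \<Rightarrow> 'n \<Rightarrow> ('n::finite \<Rightarrow> bool) \<Rightarrow> real" where
  "wr y i x = (\<Prod>j\<in>UNIV - {i}. if x j then y $ j else 1 - y $ j)"

lemma wv: "w (vupd y i t) x = (if x i then t else 1 - t) * wr y i x"
proof -
  have "w (vupd y i t) x = (if x i then vupd y i t $ i else 1 - vupd y i t $ i) *
      (\<Prod>j\<in>UNIV - {i}. if x j then vupd y i t $ j else 1 - vupd y i t $ j)"
    unfolding w_def by (rule prod.remove) auto
  also have "(\<Prod>j\<in>UNIV - {i}. if x j then vupd y i t $ j else 1 - vupd y i t $ j) = wr y i x"
    unfolding wr_def by (rule prod.cong) (auto simp: vupd_def)
  finally show ?thesis by (simp add: vupd_def)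
qed

lemma E_vupd_affine:
  "(\<Sum>x\<in>UNIV. w (vupd y i t) x * F x) =
   (\<Sum>x\<in>UNIV. w (vupd y i 0) x * F x) + t * ((\<Sum>x\<in>UNIV. w (vupd y i 1) x * F x) - (\<Sum>x\<in>UNIV. w (vupd y i 0) x * F x))"
proof -
  have pt: "w (vupd y i t) x * F x = w (vupd y i 0) x * F x + t * (w (vupd y i 1) x * F x - w (vupd y i 0) x * F x)" for x
    by (cases "x i") (simp_all add: wv algebra_simps)
  show ?thesis
    by (simp add: pt sum.distrib sum_distrib_left[symmetric] sum_subtractf)
qed

lemma grad_G: "grad (G_z E) y $ i = G_z E (vupd y i 1) - G_z E (vupd y i 0)"
proof -
  let ?a = "G_z E (vupd y i 0)" and ?b = "G_z E (vupd y i 1)"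
  have eq: "(\<lambda>t. G_z E (vupd y i t)) = (\<lambda>t. ?a + t * (?b - ?a))"
    unfolding G_alt by (rule ext, rule E_vupd_affine)
  have "((\<lambda>t. ?a + t * (?b - ?a)) has_real_derivative (?b - ?a)) (at (y $ i))"
    by (auto intro!: derivative_eq_intros)
  then have "deriv (\<lambda>t. G_z E (vupd y i t)) (y $ i) = ?b - ?a"
    unfolding eq by (rule DERIV_imp_deriv)
  then show ?thesis by (simp add: grad_def)
qed

lemma g_bin_range: "0 \<le> g_z E (bin x) \<and> g_z E (bin x) \<le> 1"
proof -
  have p: "0 \<le> (\<Prod>i\<in>reach E v. 1 - bin x $ i) \<and> (\<Prod>i\<in>reach E v. 1 - bin x $ i) \<le> 1" for v
    by (auto intro!: prod_nonneg prod_le_1 simp: bin_def)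
  have "g_z E (bin x) \<le> (\<Sum>v\<in>(UNIV::'a set). 1 / real CARD('a))"
    unfolding g_z_def by (rule sum_mono) (use p in \<open>auto intro!: divide_right_mono\<close>)
  moreover have "0 \<le> g_z E (bin x)"
    unfolding g_z_def by (rule sum_nonneg) (use p in auto)
  ultimately show ?thesis by simp
qed

lemma E_err:
  assumes "\<forall>i. 0 \<le> y $ i \<and> y $ i \<le> 1"
  shows "\<bar>(\<Sum>x\<in>UNIV. w y x * f_z E (bin x)) - mlin_eval (f_hat_poly L E) y\<bar> \<le> 1 / (real (L + 1) * 2 ^ (L + 1))"
proof -
  let ?B = "1 / (real (L + 1) * 2 ^ (L + 1))"
  have "(\<Sum>x\<in>UNIV. w y x * f_z E (bin x)) - mlin_eval (f_hat_poly L E) y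
     = (\<Sum>x\<in>UNIV. w y x * (h (g_z E (bin x)) - h_hat L (g_z E (bin x))))"
    by (subst mlin_E[of "f_hat_poly L E" y]) (simp add: ev_fhat f_z_def sum_subtractf right_diff_distrib)
  also have "\<bar>\<dots>\<bar> \<le> (\<Sum>x\<in>UNIV. \<bar>w y x * (h (g_z E (bin x)) - h_hat L (g_z E (bin x)))\<bar>)"
    by (rule sum_abs)
  also have "\<dots> \<le> (\<Sum>x\<in>UNIV. w y x * ?B)"
  proof (rule sum_mono)
    fix x
    have "\<bar>h (g_z E (bin x)) - h_hat L (g_z E (bin x))\<bar> \<le> ?B"
      using g_bin_range[of E x] by (intro h_hat_err) auto
    then show "\<bar>w y x * (h (g_z E (bin x)) - h_hat L (g_z E (bin x)))\<bar> \<le> w y x * ?B"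
    proof -
      have "w y x * \<bar>h (g_z E (bin x)) - h_hat L (g_z E (bin x))\<bar> \<le> w y x * ?B"
        by (rule mult_left_mono[OF \<open>\<bar>h (g_z E (bin x)) - h_hat L (g_z E (bin x))\<bar> \<le> ?B\<close> w_nonneg[OF assms]])
      then show ?thesis using w_nonneg[OF assms, of x] by (simp add: abs_mult)
    qed
  qed
  also have "\<dots> = ?B" by (simp only: sum_distrib_right[symmetric] w_sum mult_1)
  finally show ?thesis .
qed

theorem theorem4:
  fixes E :: "'n::finite \<Rightarrow> 'n \<Rightarrow> bool" and L :: nat and y :: "real ^ 'n"
  assumes "\<forall>i. 0 \<le> y $ i \<and> y $ i \<le> 1"
  shows "norm (grad (G_z E) y - grad_est L E y)
           \<le> sqrt (real CARD('n)) / (real (L + 1) * 2 ^ L)"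
proof -
  let ?B = "1 / (real (L + 1) * 2 ^ (L + 1))"
  let ?C = "1 / (real (L + 1) * 2 ^ L)"
  have comp: "\<bar>(grad (G_z E) y - grad_est L E y) $ i\<bar> \<le> ?C" for i
  proof -
    have r: "\<forall>j. 0 \<le> vupd y i t $ j \<and> vupd y i t $ j \<le> 1" if "0 \<le> t" "t \<le> 1" for t
      using assms that by (auto simp: vupd_def)
    have e1: "\<bar>G_z E (vupd y i 1) - mlin_eval (f_hat_poly L E) (vupd y i 1)\<bar> \<le> ?B"
      using E_err[OF r, of 1] by (simp add: G_alt)
    have e0: "\<bar>G_z E (vupd y i 0) - mlin_eval (f_hat_poly L E) (vupd y i 0)\<bar> \<le> ?B"
      using E_err[OF r, of 0] by (simp add: G_alt)
    have "(grad (G_z E) y - grad_est L E y) $ i =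
       (G_z E (vupd y i 1) - mlin_eval (f_hat_poly L E) (vupd y i 1)) -
       (G_z E (vupd y i 0) - mlin_eval (f_hat_poly L E) (vupd y i 0))"
      by (simp add: grad_G grad_est_def)
    also have "\<bar>\<dots>\<bar> \<le> ?B + ?B"
      using e0 e1 by linarith
    also have "?B + ?B = ?C"
    proof -
      have "?B = ?C / 2" by (simp add: mult_ac)
      then show ?thesis by simp
    qed
    finally show ?thesis .
  qed
  have "norm (grad (G_z E) y - grad_est L E y) \<le> norm ((\<chi> i. ?C) :: real ^ 'n)"
    by (rule norm_le_componentwise_cart) (use comp in simp)
  also have "norm ((\<chi> i. ?C) :: real ^ 'n) = sqrt (real CARD('n) * ?C^2)"
    by (simp add: norm_vec_def L2_set_def)
  also have "\<dots> = sqrt (real CARD('n)) * ?C"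
    by (simp add: real_sqrt_mult)
  also have "\<dots> = sqrt (real CARD('n)) / (real (L + 1) * 2 ^ L)"
    by simp
  finally show ?thesis .
qed

end
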